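(* Let $M$ be a tame paving matroid. Then $M$ is quasi-paving.
   Context: A matroid $M$ of rank $n$ is a paving matroid if every circuit has cardinality $n$ or $n+1$. A dependent hyperplane of $M$ is a maximal subset of the ground set of cardinality at least $n$ in which every $n$-element subset is a circuit. A paving matroid is tame if any three distinct dependent hyperplanes have empty intersection. Quasi-paving construction: given a positive integer $n\le d$ and a collection $\mathcal{H}=\{H_1,\ldots,H_k\}$ of subsets of $[d]$ any three of which have empty intersection, the matroid on $[d]$ whose circuits are: (Type 1) the $(n-1)$-element subsets contained in the intersection of two distinct members of $\mathcal{H}$; (Type 2) the $n$-element subsets of some $H_i$ containing no Type 1 set; (Type 3) the $(n+1)$-element subsets containing no Type 1 or Type 2 set. A matroid is called quasi-paving (more precisely $n$-quasi-paving) if its set of circuits arises from this construction for some such $\mathcal{H}$ and $n$; $\mathcal{H}$ is then called a representation of it. *)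

theory Defs
  imports Main
begin

definition matroid_circuits :: "'a set \<Rightarrow> 'a set set \<Rightarrow> bool" where
  "matroid_circuits E C \<longleftrightarrow>
     finite E \<and> (\<forall>c\<in>C. c \<subseteq> E) \<and> {} \<notin> C \<and>
     (\<forall>c1\<in>C. \<forall>c2\<in>C. c1 \<subseteq> c2 \<longrightarrow> c1 = c2) \<and>
     (\<forall>c1\<in>C. \<forall>c2\<in>C. \<forall>e. c1 \<noteq> c2 \<and> e \<in> c1 \<inter> c2 \<longrightarrow>
        (\<exists>c3\<in>C. c3 \<subseteq> (c1 \<union> c2) - {e}))"

definition indep :: "'a set set \<Rightarrow> 'a set \<Rightarrow> bool" where
  "indep C I \<longleftrightarrow> \<not> (\<exists>c\<in>C. c \<subseteq> I)"

definition matroid_rank :: "'a set \<Rightarrow> 'a set set \<Rightarrow> nat" where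
  "matroid_rank E C = Max {card I | I. I \<subseteq> E \<and> indep C I}"

definition paving :: "'a set \<Rightarrow> 'a set set \<Rightarrow> bool" where
  "paving E C \<longleftrightarrow>
     (\<forall>c\<in>C. card c = matroid_rank E C \<or> card c = matroid_rank E C + 1)"

definition dep_hyp_cand :: "'a set \<Rightarrow> 'a set set \<Rightarrow> 'a set \<Rightarrow> bool" where
  "dep_hyp_cand E C X \<longleftrightarrow>
     X \<subseteq> E \<and> card X \<ge> matroid_rank E C \<and>
     (\<forall>Y\<subseteq>X. card Y = matroid_rank E C \<longrightarrow> Y \<in> C)"

definition dependent_hyperplane :: "'a set \<Rightarrow> 'a set set \<Rightarrow> 'a set \<Rightarrow> bool" where
  "dependent_hyperplane E C X \<longleftrightarrow>
     dep_hyp_cand E C X \<and> (\<forall>Y. dep_hyp_cand E C Y \<and> X \<subseteq> Y \<longrightarrow> Y = X)"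

definition tame_paving :: "'a set \<Rightarrow> 'a set set \<Rightarrow> bool" where
  "tame_paving E C \<longleftrightarrow> paving E C \<and>
     (\<forall>X Y Z. dependent_hyperplane E C X \<and> dependent_hyperplane E C Y \<and>
        dependent_hyperplane E C Z \<and> X \<noteq> Y \<and> X \<noteq> Z \<and> Y \<noteq> Z \<longrightarrow>
        X \<inter> Y \<inter> Z = {})"

definition qp_type1 :: "'a set \<Rightarrow> nat \<Rightarrow> 'a set set \<Rightarrow> 'a set set" where
  "qp_type1 E n H = {X. X \<subseteq> E \<and> card X = n - 1 \<and>
      (\<exists>Hi\<in>H. \<exists>Hj\<in>H. Hi \<noteq> Hj \<and> X \<subseteq> Hi \<inter> Hj)}"

definition qp_type2 :: "'a set \<Rightarrow> nat \<Rightarrow> 'a set set \<Rightarrow> 'a set set" where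
  "qp_type2 E n H = {X. X \<subseteq> E \<and> card X = n \<and> (\<exists>Hi\<in>H. X \<subseteq> Hi) \<and>
      \<not> (\<exists>Y\<in>qp_type1 E n H. Y \<subseteq> X)}"

definition qp_type3 :: "'a set \<Rightarrow> nat \<Rightarrow> 'a set set \<Rightarrow> 'a set set" where
  "qp_type3 E n H = {X. X \<subseteq> E \<and> card X = n + 1 \<and>
      \<not> (\<exists>Y\<in>qp_type1 E n H \<union> qp_type2 E n H. Y \<subseteq> X)}"

definition qp_circuits :: "'a set \<Rightarrow> nat \<Rightarrow> 'a set set \<Rightarrow> 'a set set" where
  "qp_circuits E n H = qp_type1 E n H \<union> qp_type2 E n H \<union> qp_type3 E n H"

definition quasi_paving :: "'a set \<Rightarrow> 'a set set \<Rightarrow> bool" where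
  "quasi_paving E C \<longleftrightarrow>
     (\<exists>n H. 0 < n \<and> n \<le> card E \<and> (\<forall>Hi\<in>H. Hi \<subseteq> E) \<and>
        (\<forall>A\<in>H. \<forall>B\<in>H. \<forall>D\<in>H. A \<noteq> B \<and> A \<noteq> D \<and> B \<noteq> D \<longrightarrow> A \<inter> B \<inter> D = {}) \<and>
        C = qp_circuits E n H)"

end

theory Submission
  imports Defs
begin

lemma rank_set_finite:
  assumes "finite E"
  shows "finite {card I | I. I \<subseteq> E \<and> indep C I}"
  by (rule finite_subset[of _ "{0..card E}"]) (use assms in \<open>auto intro: card_mono\<close>)

lemma empty_indep: "{} \<notin> C \<Longrightarrow> indep C {}"
  by (auto simp: indep_def)

lemma rank_bound:
  assumes "matroid_circuits E C" "I \<subseteq> E" "indep C I"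
  shows "card I \<le> matroid_rank E C"
proof -
  have f: "finite {card I | I. I \<subseteq> E \<and> indep C I}"
    using assms(1) rank_set_finite[of E C] unfolding matroid_circuits_def by blast
  have "card I \<in> {card I | I. I \<subseteq> E \<and> indep C I}" using assms(2,3) by blast
  then show ?thesis unfolding matroid_rank_def using Max_ge[OF f] by blast
qed

lemma rank_attained:
  assumes "matroid_circuits E C"
  shows "\<exists>I. I \<subseteq> E \<and> indep C I \<and> card I = matroid_rank E C"
proof -
  have f: "finite {card I | I. I \<subseteq> E \<and> indep C I}"
    using assms rank_set_finite[of E C] unfolding matroid_circuits_def by auto
  have ne: "{card I | I. I \<subseteq> E \<and> indep C I} \<noteq> {}"
  proof -
    have "{} \<notin> C" using assms unfolding matroid_circuits_def by blast
    then have "indep C {}" by (rule empty_indep)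
    then have "card ({}::'a set) \<in> {card I | I. I \<subseteq> E \<and> indep C I}"
      by (auto intro!: exI[of _ "{}"])
    then show ?thesis by (metis empty_iff)
  qed
  have "Max {card I | I. I \<subseteq> E \<and> indep C I} \<in> {card I | I. I \<subseteq> E \<and> indep C I}"
    by (rule Max_in[OF f ne])
  then obtain I where I: "I \<subseteq> E" "indep C I" "card I = Max {card I | I. I \<subseteq> E \<and> indep C I}"
    by auto
  show ?thesis unfolding matroid_rank_def
    by (intro exI[of _ I] conjI) (fact I(1), fact I(2), fact I(3))
qed

lemma dep_big:
  assumes "matroid_circuits E C" "X \<subseteq> E" "card X > matroid_rank E C"
  shows "\<exists>c\<in>C. c \<subseteq> X"
proof (rule ccontr)
  assume "\<not> (\<exists>c\<in>C. c \<subseteq> X)"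
  then have "indep C X" unfolding indep_def .
  then have "card X \<le> matroid_rank E C" by (rule rank_bound[OF assms(1,2)])
  then show False using assms(3) by linarith
qed

lemma circ_ge:
  assumes "paving E C" "c \<in> C"
  shows "card c \<ge> matroid_rank E C"
proof -
  have "\<forall>c\<in>C. card c = matroid_rank E C \<or> card c = matroid_rank E C + 1"
    using assms(1) unfolding paving_def .
  then have "card c = matroid_rank E C \<or> card c = matroid_rank E C + 1"
    using assms(2) by (rule bspec)
  then show ?thesis by linarith
qed

lemma mc_elim1:
  assumes "matroid_circuits E C"
  shows "\<forall>c1\<in>C. \<forall>c2\<in>C. \<forall>e. c1 \<noteq> c2 \<and> e \<in> c1 \<inter> c2 \<longrightarrow>
        (\<exists>c3\<in>C. c3 \<subseteq> (c1 \<union> c2) - {e})" using assms unfolding matroid_circuits_def by (elim conjE)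
lemma mc_elim:
  assumes "matroid_circuits E C" "c1 \<in> C" "c2 \<in> C" "c1 \<noteq> c2" "e \<in> c1" "e \<in> c2"
  shows "\<exists>c3\<in>C. c3 \<subseteq> (c1 \<union> c2) - {e}"
proof -
  have "c1 \<noteq> c2 \<and> e \<in> c1 \<inter> c2 \<longrightarrow> (\<exists>c3\<in>C. c3 \<subseteq> (c1 \<union> c2) - {e})"
    using mc_elim1[OF assms(1)] assms(2,3) by simp
  then show ?thesis using assms(4-6) by simp
qed

lemma mc_sub1: "matroid_circuits E C \<Longrightarrow> \<forall>c\<in>C. c \<subseteq> E"
  unfolding matroid_circuits_def by (elim conjE)

lemma mc_sub: "matroid_circuits E C \<Longrightarrow> c \<in> C \<Longrightarrow> c \<subseteq> E"
  using mc_sub1 by (rule bspec)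

lemma mc_fin: "matroid_circuits E C \<Longrightarrow> finite E"
  unfolding matroid_circuits_def by (elim conjE)

lemma exchange_all:
  assumes mc: "matroid_circuits E C" and pav: "paving E C"
    and r: "r = matroid_rank E C" "r \<ge> 1"
    and S: "S \<subseteq> E" "card S = r - 1"
    and W: "W = S \<union> {a. a \<notin> S \<and> insert a S \<in> C}"
  shows "\<And>Z. Z \<subseteq> W \<Longrightarrow> card Z = r \<Longrightarrow> Z \<in> C"
proof -
  have finE: "finite E" using mc_fin[OF mc] .
  have CE: "\<And>c. c \<in> C \<Longrightarrow> c \<subseteq> E" using mc_sub[OF mc] .
  have finS: "finite S" using finite_subset[OF S(1) finE] .
  have WE: "W \<subseteq> E"
  proof
    fix x assume "x \<in> W"
    then have "x \<in> S \<or> insert x S \<in> C" using W by auto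
    then show "x \<in> E"
    proof
      assume "x \<in> S" then show ?thesis using S(1) by blast
    next
      assume "insert x S \<in> C"
      then have "insert x S \<subseteq> E" by (rule CE)
      then show ?thesis by simp
    qed
  qed
  have cge: "\<And>c. c \<in> C \<Longrightarrow> card c \<ge> r" using circ_ge[OF pav] r(1) by simp
  have main: "\<And>Z. Z \<subseteq> W \<Longrightarrow> card Z = r \<Longrightarrow> card (S - Z) = k \<Longrightarrow> Z \<in> C" for k
  proof (induction k)
    case 0
    fix Z assume Z: "Z \<subseteq> W" "card Z = r" "card (S - Z) = 0"
    have finZ: "finite Z" using finite_subset[OF subset_trans[OF Z(1) WE] finE] .
    have "S - Z = {}" using Z(3) finS by simp
    then have SZ: "S \<subseteq> Z" by blast
    have "card S < card Z" using Z(2) S(2) r(2) by linarith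
    have "Z - S \<noteq> {}"
    proof
      assume "Z - S = {}"
      then have "Z \<subseteq> S" by blast
      then have "card Z \<le> card S" using card_mono[OF finS] by blast
      then show False using \<open>card S < card Z\<close> by linarith
    qed
    then obtain a where a: "a \<in> Z" "a \<notin> S" by blast
    have "a \<in> W" using a(1) Z(1) by blast
    then have aW: "insert a S \<in> C" using a(2) W by blast
    have i1: "insert a S \<subseteq> Z" using a(1) SZ by blast
    have i2: "card (insert a S) = card Z" using finS a(2) Z(2) S(2) r(2) by simp
    have "insert a S = Z" by (rule card_subset_eq[OF finZ i1 i2])
    then show "Z \<in> C" using aW by simp
  next
    case (Suc k)
    fix Z assume Z: "Z \<subseteq> W" "card Z = r" "card (S - Z) = Suc k"
    have finZ: "finite Z" using finite_subset[OF subset_trans[OF Z(1) WE] finE] .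
    have "S - Z \<noteq> {}"
    proof
      assume h: "S - Z = {}"
      have "card (S - Z) = 0" unfolding h by simp
      then show False using Z(3) by simp
    qed
    then obtain s where s: "s \<in> S" "s \<notin> Z" by blast
    have e1: "card (S - Z) = card S - card (S \<inter> Z)"
      using finS by (simp add: card_Diff_subset_Int)
    have e2: "card (Z - S) = card Z - card (Z \<inter> S)"
      using finZ by (simp add: card_Diff_subset_Int)
    have e3: "card (S \<inter> Z) \<le> card S" using finS by (simp add: card_mono)
    have e4: "Z \<inter> S = S \<inter> Z" by blast
    have e5: "card (Z - S) = card Z - card (S \<inter> Z)" using e2 e4 by simp
    have cc2: "card (Z - S) \<ge> 2"
      using e1 e5 e3 Z(2,3) S(2) r(2) by arith
    have finZS: "finite (Z - S)" using finZ by simp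
    have "Z - S \<noteq> {}" using cc2 by (metis card.empty not_numeral_le_zero)
    then obtain a where a: "a \<in> Z - S" by blast
    have "card (Z - S - {a}) \<ge> 1" using cc2 a finZS by simp
    then have "Z - S - {a} \<noteq> {}" by (metis card.empty not_one_le_zero)
    then obtain b where b: "b \<in> Z - S - {a}" by blast
    have ab: "a \<in> Z - S" "b \<in> Z - S" "a \<noteq> b" using a b by auto
    define Z1 where "Z1 = insert s (Z - {b})"
    define Z2 where "Z2 = insert s (Z - {a})"
    have sW: "s \<in> W" using s W by auto
    have c1: "card Z1 = r" unfolding Z1_def using finZ s ab Z r by auto
    have c2: "card Z2 = r" unfolding Z2_def using finZ s ab Z r by auto
    have d1: "S - Z1 = (S - Z) - {s}" unfolding Z1_def using ab by auto
    have d2: "S - Z2 = (S - Z) - {s}" unfolding Z2_def using ab by auto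
    have k: "card ((S - Z) - {s}) = k" using Z(3) s finS by auto
    have Z1C: "Z1 \<in> C"
      by (rule Suc.IH) (use Z sW c1 d1 k in \<open>auto simp: Z1_def\<close>)
    have Z2C: "Z2 \<in> C"
      by (rule Suc.IH) (use Z sW c2 d2 k in \<open>auto simp: Z2_def\<close>)
    have ne: "Z1 \<noteq> Z2" unfolding Z1_def Z2_def using ab s by auto
    have "s \<in> Z1 \<inter> Z2" unfolding Z1_def Z2_def by auto
    then obtain c3 where c3: "c3 \<in> C" "c3 \<subseteq> (Z1 \<union> Z2) - {s}"
      using mc_elim[OF mc Z1C Z2C ne] by blast
    have "(Z1 \<union> Z2) - {s} = Z" unfolding Z1_def Z2_def using ab s by auto
    then have "c3 \<subseteq> Z" using c3 by simp
    moreover have "card c3 = card Z" using cge[OF c3(1)] Z(2) card_mono[OF finZ \<open>c3 \<subseteq> Z\<close>] by linarith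
    ultimately have "c3 = Z" using finZ card_subset_eq by blast
    then show "Z \<in> C" using c3 by simp
  qed
  fix Z assume "Z \<subseteq> W" "card Z = r"
  then show "Z \<in> C" using main by blast
qed

lemma hyp_share:
  assumes mc: "matroid_circuits E C" and pav: "paving E C"
    and r: "r = matroid_rank E C" "r \<ge> 1"
    and X: "dependent_hyperplane E C X" and Y: "dependent_hyperplane E C Y"
    and S: "S \<subseteq> X \<inter> Y" "card S = r - 1"
  shows "X = Y"
proof -
  define W where "W = S \<union> {a. a \<notin> S \<and> insert a S \<in> C}"
  have finE: "finite E" using mc_fin[OF mc] .
  have XE: "X \<subseteq> E" and YE: "Y \<subseteq> E" using X Y
    unfolding dependent_hyperplane_def dep_hyp_cand_def by auto
  have SE: "S \<subseteq> E" using S XE by auto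
  have finS: "finite S" using SE finE finite_subset by blast
  have sub: "V \<subseteq> W" if V: "dependent_hyperplane E C V" "S \<subseteq> V" for V
  proof
    fix x assume x: "x \<in> V"
    show "x \<in> W"
    proof (cases "x \<in> S")
      case True then show ?thesis unfolding W_def by auto
    next
      case False
      have "card (insert x S) = r" using False finS S r by auto
      moreover have "insert x S \<subseteq> V" using x V by auto
      ultimately have "insert x S \<in> C" using V r
        unfolding dependent_hyperplane_def dep_hyp_cand_def by blast
      then show ?thesis using False unfolding W_def by auto
    qed
  qed
  have XW: "X \<subseteq> W" using sub[OF X] S by auto
  have YW: "Y \<subseteq> W" using sub[OF Y] S by auto
  have allC: "\<And>Z. Z \<subseteq> W \<Longrightarrow> card Z = r \<Longrightarrow> Z \<in> C"
    using exchange_all[OF mc pav r SE S(2) W_def] by blast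
  have cX: "card X \<ge> r" using X r unfolding dependent_hyperplane_def dep_hyp_cand_def by auto
  have finU: "finite (X \<union> Y)" using XE YE finE finite_subset by blast
  have "card (X \<union> Y) \<ge> r" using cX card_mono[OF finU, of X] by auto
  moreover have "\<forall>Z\<subseteq>X \<union> Y. card Z = matroid_rank E C \<longrightarrow> Z \<in> C"
  proof (intro allI impI)
    fix Z assume "Z \<subseteq> X \<union> Y" "card Z = matroid_rank E C"
    then show "Z \<in> C" using allC[of Z] XW YW r(1) by blast
  qed
  ultimately have cand: "dep_hyp_cand E C (X \<union> Y)"
    unfolding dep_hyp_cand_def using XE YE r(1) by blast
  have "X \<union> Y = X" using X cand unfolding dependent_hyperplane_def by blast
  moreover have "X \<union> Y = Y" using Y cand unfolding dependent_hyperplane_def by blast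
  ultimately show ?thesis by simp
qed

lemma hyp_exists:
  assumes mc: "matroid_circuits E C" and c: "c \<in> C" "card c = matroid_rank E C"
  shows "\<exists>X. dependent_hyperplane E C X \<and> c \<subseteq> X"
proof -
  have finE: "finite E" using mc_fin[OF mc] .
  have cE: "c \<subseteq> E" using mc_sub[OF mc c(1)] .
  have finc: "finite c" using cE finE finite_subset by blast
  have cc: "dep_hyp_cand E C c" unfolding dep_hyp_cand_def
    using cE c finc card_subset_eq by (metis order_refl)
  let ?A = "{X. dep_hyp_cand E C X \<and> c \<subseteq> X}"
  have fA: "finite ?A"
    by (rule finite_subset[of _ "Pow E"]) (auto simp: dep_hyp_cand_def finE)
  obtain m where m: "m \<in> ?A" "\<forall>b\<in>?A. m \<le> b \<longrightarrow> m = b"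
    using finite_has_maximal[OF fA] cc by blast
  have "dependent_hyperplane E C m"
    unfolding dependent_hyperplane_def using m by auto
  then show ?thesis using m by auto
qed

theorem proposition3p4:
  fixes E :: "'a set" and C :: "'a set set"
  assumes "matroid_circuits E C"
    and "E \<noteq> {}"
    and "tame_paving E C"
  shows "quasi_paving E C"
proof -
  note mc = assms(1)
  have pav: "paving E C" using assms(3) unfolding tame_paving_def by auto
  define r where "r = matroid_rank E C"
  have finE: "finite E" using mc_fin[OF mc] .
  have CE: "\<And>c. c \<in> C \<Longrightarrow> c \<subseteq> E" using mc_sub[OF mc] .
  have finC: "\<And>c. c \<in> C \<Longrightarrow> finite c" using CE finE finite_subset by blast
  have csz: "\<And>c. c \<in> C \<Longrightarrow> card c = r \<or> card c = r + 1"
    using pav unfolding paving_def r_def by auto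
  have clutter: "\<And>c1 c2. c1 \<in> C \<Longrightarrow> c2 \<in> C \<Longrightarrow> c1 \<subseteq> c2 \<Longrightarrow> c1 = c2"
  proof -
    have "\<forall>c1\<in>C. \<forall>c2\<in>C. c1 \<subseteq> c2 \<longrightarrow> c1 = c2"
      using mc unfolding matroid_circuits_def by (elim conjE)
    then show "\<And>c1 c2. c1 \<in> C \<Longrightarrow> c2 \<in> C \<Longrightarrow> c1 \<subseteq> c2 \<Longrightarrow> c1 = c2" by blast
  qed
  have emp: "{} \<notin> C" using mc unfolding matroid_circuits_def by (elim conjE)
  have cne: "\<And>c. c \<in> C \<Longrightarrow> card c \<noteq> 0"
  proof
    fix c assume c: "c \<in> C" "card c = 0"
    then have "c = {}" using finC[OF c(1)] by simp
    then show False using c(1) emp by simp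
  qed
  obtain I where I: "I \<subseteq> E" "card I = r" using rank_attained[OF mc] r_def by auto
  have rE: "r \<le> card E" using I finE card_mono by metis
  show ?thesis
  proof (cases "r = 0")
    case True
    have Csing: "C = {X. X \<subseteq> E \<and> card X = 1}"
    proof (intro set_eqI iffI)
      fix c assume c: "c \<in> C"
      then have "card c \<noteq> 0" by (rule cne)
      moreover have "card c = 0 \<or> card c = 1" using csz[OF c] True by simp
      ultimately have "card c = 1" by simp
      then show "c \<in> {X. X \<subseteq> E \<and> card X = 1}" using CE[OF c] by simp
    next
      fix X assume X: "X \<in> {X. X \<subseteq> E \<and> card X = 1}"
      then have XE: "X \<subseteq> E" and X1: "card X = 1" by simp_all
      have "card X > matroid_rank E C" using X1 True r_def by simp
      then obtain c where c: "c \<in> C" "c \<subseteq> X" using dep_big[OF mc XE] by blast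
      have "card c \<noteq> 0" using c(1) by (rule cne)
      obtain x where x: "X = {x}" using X1 card_1_singletonE by blast
      have "c \<noteq> {}" using \<open>card c \<noteq> 0\<close> by (metis card.empty)
      then have "c = X" using c(2) x by blast
      then show "X \<in> C" using c(1) by simp
    qed
    have t1: "qp_type1 E 1 {E} = {}" unfolding qp_type1_def by blast
    have t2: "qp_type2 E 1 {E} = {X. X \<subseteq> E \<and> card X = 1}"
      unfolding qp_type2_def t1 by blast
    have t3: "qp_type3 E 1 {E} = {}"
    proof -
      have "False" if X: "X \<in> qp_type3 E 1 {E}" for X
      proof -
        have XE: "X \<subseteq> E" and X2: "card X = 2"
          and no: "\<not> (\<exists>Y\<in>{X. X \<subseteq> E \<and> card X = 1}. Y \<subseteq> X)"
          using X unfolding qp_type3_def t1 t2 by simp_all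
        have "X \<noteq> {}" using X2 by (metis card.empty zero_neq_numeral)
        then obtain x where x: "x \<in> X" by blast
        have "{x} \<in> {X. X \<subseteq> E \<and> card X = 1}" using x XE by auto
        moreover have "{x} \<subseteq> X" using x by simp
        ultimately show False using no by blast
      qed
      then show ?thesis by blast
    qed
    have "C = qp_circuits E 1 {E}"
      unfolding qp_circuits_def t1 t2 t3 Csing by auto
    moreover have "1 \<le> card E" using assms(2) finE by (simp add: Suc_leI card_gt_0_iff)
    ultimately show ?thesis unfolding quasi_paving_def
      by (intro exI[of _ 1] exI[of _ "{E}"]) auto
  next
    case False
    then have r1: "r \<ge> 1" by simp
    define H where "H = {X. dependent_hyperplane E C X}"
    have HE: "\<forall>Hi\<in>H. Hi \<subseteq> E"
      unfolding H_def dependent_hyperplane_def dep_hyp_cand_def by blast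
    have T: "\<forall>X Y Z. dependent_hyperplane E C X \<and> dependent_hyperplane E C Y \<and>
        dependent_hyperplane E C Z \<and> X \<noteq> Y \<and> X \<noteq> Z \<and> Y \<noteq> Z \<longrightarrow>
        X \<inter> Y \<inter> Z = {}"
      using assms(3) unfolding tame_paving_def by (elim conjE)
    have tri: "\<forall>A\<in>H. \<forall>B\<in>H. \<forall>D\<in>H. A \<noteq> B \<and> A \<noteq> D \<and> B \<noteq> D \<longrightarrow> A \<inter> B \<inter> D = {}"
    proof (intro ballI impI)
      fix A B D assume "A \<in> H" "B \<in> H" "D \<in> H" "A \<noteq> B \<and> A \<noteq> D \<and> B \<noteq> D"
      then show "A \<inter> B \<inter> D = {}" using T[rule_format, of A B D] unfolding H_def by simp
    qed
    have t1: "qp_type1 E r H = {}"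
    proof -
      have False if X: "X \<in> qp_type1 E r H" for X
      proof -
        obtain Hi Hj where h: "card X = r - 1" "Hi \<in> H" "Hj \<in> H" "Hi \<noteq> Hj" "X \<subseteq> Hi \<inter> Hj"
          using X unfolding qp_type1_def by blast
        have "Hi = Hj"
          by (rule hyp_share[OF mc pav r_def r1, of Hi Hj X]) (use h in \<open>simp_all add: H_def\<close>)
        then show False using h(4) by simp
      qed
      then show ?thesis by blast
    qed
    have t2: "qp_type2 E r H = {c \<in> C. card c = r}"
    proof (intro set_eqI iffI)
      fix X assume "X \<in> qp_type2 E r H"
      then obtain Hi where X: "card X = r" "Hi \<in> H" "X \<subseteq> Hi"
        unfolding qp_type2_def by blast
      have "\<forall>Y\<subseteq>Hi. card Y = matroid_rank E C \<longrightarrow> Y \<in> C"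
        using X(2) unfolding H_def dependent_hyperplane_def dep_hyp_cand_def by blast
      then have "X \<in> C" using X(1,3) r_def by blast
      then show "X \<in> {c \<in> C. card c = r}" using X(1) by simp
    next
      fix c assume c: "c \<in> {c \<in> C. card c = r}"
      then obtain X where X: "dependent_hyperplane E C X" "c \<subseteq> X"
        using hyp_exists[OF mc] r_def by auto
      have XH: "X \<in> H" using X(1) unfolding H_def by simp
      have "c \<subseteq> E" "card c = r" using c CE by auto
      then show "c \<in> qp_type2 E r H" unfolding qp_type2_def t1 using XH X(2) by blast
    qed
    have t3: "qp_type3 E r H = {c \<in> C. card c = r + 1}"
    proof (intro set_eqI iffI)
      fix X assume X0: "X \<in> qp_type3 E r H"
      have XE: "X \<subseteq> E" and X1: "card X = r + 1"
        and no: "\<not> (\<exists>Y\<in>qp_type1 E r H \<union> qp_type2 E r H. Y \<subseteq> X)"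
        using X0 unfolding qp_type3_def by simp_all
      have no2: "\<And>Y. Y \<in> C \<Longrightarrow> card Y = r \<Longrightarrow> \<not> Y \<subseteq> X"
        using no unfolding t2 by blast
      have "card X > matroid_rank E C" using X1 r_def by simp
      then obtain c where c: "c \<in> C" "c \<subseteq> X" using dep_big[OF mc XE] by blast
      have "card c \<noteq> r" using no2 c by blast
      then have cc: "card c = card X" using csz[OF c(1)] X1 by simp
      have finX: "finite X" using finite_subset[OF XE finE] .
      have "c = X" by (rule card_subset_eq[OF finX c(2) cc])
      then show "X \<in> {c \<in> C. card c = r + 1}" using c(1) X1 by simp
    next
      fix c assume c: "c \<in> {c \<in> C. card c = r + 1}"
      then have cC: "c \<in> C" and c1: "card c = r + 1" by simp_all
      have no: "\<not> (\<exists>Y\<in>qp_type1 E r H \<union> qp_type2 E r H. Y \<subseteq> c)"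
      proof
        assume "\<exists>Y\<in>qp_type1 E r H \<union> qp_type2 E r H. Y \<subseteq> c"
        then obtain Y where Y: "Y \<in> C" "card Y = r" "Y \<subseteq> c" unfolding t1 t2 by blast
        have "Y = c" using clutter[OF Y(1) cC Y(3)] .
        then show False using Y(2) c1 by simp
      qed
      have "c \<subseteq> E" using CE[OF cC] .
      then show "c \<in> qp_type3 E r H" unfolding qp_type3_def using c1 no by blast
    qed
    have Ceq: "C = qp_circuits E r H"
    proof (intro set_eqI iffI)
      fix c assume "c \<in> C"
      then show "c \<in> qp_circuits E r H" unfolding qp_circuits_def t1 t2 t3 using csz by blast
    next
      fix c assume "c \<in> qp_circuits E r H"
      then show "c \<in> C" unfolding qp_circuits_def t1 t2 t3 by blast
    qed
    have r0: "0 < r" using r1 by simp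
    show ?thesis unfolding quasi_paving_def
      by (rule exI[of _ r], rule exI[of _ H]) (intro conjI r0 rE HE tri Ceq)
  qed
qed

end
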